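(* Let $X\in\mathbb{R}^{n\times p}$ and $\Psi=\frac1nX^\top X$ satisfy $\Psi_{jj}=1$ and $\max_{j'\ne j}|\Psi_{jj'}|\le\frac{1}{7\alpha s}$ for all $j\in[p]$, for some integer $s\ge1$ and some $\alpha>1$. Let $B^*\in\mathbb{R}^{p\times q}$ with row support $\mathcal S^*=\{j:\|B^*_{j:}\|_2\ne0\}$ satisfying $|\mathcal S^*|\le s$, and let $\hat B\in\mathbb{R}^{p\times q}$ be such that $\Delta=\hat B-B^*$ satisfies $\|\Delta_{\mathcal S^{*c}}\|_{2,1}\le3\|\Delta_{\mathcal S^*}\|_{2,1}$. Then (a) $\|\Delta_{\mathcal S^*}\|_F\le\frac{\alpha}{\alpha-1}4\sqrt s\,\|\Psi\Delta\|_{2,\infty}$; (b) $\|\Delta\|_{2,1}\le\frac{\alpha}{\alpha-1}16s\,\|\Psi\Delta\|_{2,\infty}$; (c) $\|\Delta\|_{2,\infty}\le\Big(1+\frac{16}{7(\alpha-1)}\Big)\|\Psi\Delta\|_{2,\infty}$.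
   Context: $M_{j:}$ is the $j$-th row of $M$; $\|M\|_{2,1}=\sum_j\|M_{j:}\|_2$, $\|M\|_{2,\infty}=\max_j\|M_{j:}\|_2$, $\|\cdot\|_F$ Frobenius norm. For $\mathcal S\subset[p]$, $M_{\mathcal S}$ equals $M$ on rows indexed by $\mathcal S$ and is zero elsewhere; $\mathcal S^{*c}=[p]\setminus\mathcal S^*$. *)

theory Defs
  imports "HOL-Analysis.Analysis"
begin

(* Matrices are functions nat => nat => real; a p x q matrix M uses entries M j k, j < p, k < q. *)

definition row_norm :: "nat \<Rightarrow> (nat \<Rightarrow> nat \<Rightarrow> real) \<Rightarrow> nat \<Rightarrow> real" where
  "row_norm q M j = sqrt (\<Sum>k<q. (M j k)^2)"

definition norm21 :: "nat \<Rightarrow> nat \<Rightarrow> (nat \<Rightarrow> nat \<Rightarrow> real) \<Rightarrow> real" where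
  "norm21 p q M = (\<Sum>j<p. row_norm q M j)"

definition norm2inf :: "nat \<Rightarrow> nat \<Rightarrow> (nat \<Rightarrow> nat \<Rightarrow> real) \<Rightarrow> real" where
  "norm2inf p q M = Max (insert 0 (row_norm q M ` {..<p}))"

definition frob :: "nat \<Rightarrow> nat \<Rightarrow> (nat \<Rightarrow> nat \<Rightarrow> real) \<Rightarrow> real" where
  "frob p q M = sqrt (\<Sum>j<p. \<Sum>k<q. (M j k)^2)"

definition restr_rows :: "nat set \<Rightarrow> (nat \<Rightarrow> nat \<Rightarrow> real) \<Rightarrow> nat \<Rightarrow> nat \<Rightarrow> real" where
  "restr_rows S M = (\<lambda>j k. if j \<in> S then M j k else 0)"

definition mat_mul :: "nat \<Rightarrow> (nat \<Rightarrow> nat \<Rightarrow> real) \<Rightarrow> (nat \<Rightarrow> nat \<Rightarrow> real) \<Rightarrow> nat \<Rightarrow> nat \<Rightarrow> real" where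
  "mat_mul m A M = (\<lambda>i k. \<Sum>l<m. A i l * M l k)"

definition gram :: "nat \<Rightarrow> (nat \<Rightarrow> nat \<Rightarrow> real) \<Rightarrow> nat \<Rightarrow> nat \<Rightarrow> real" where
  "gram n X = (\<lambda>j j'. (1 / real n) * (\<Sum>i<n. X i j * X i j'))"

end

theory Submission
  imports Defs
begin

lemma rn_L2: "row_norm q M j = L2_set (M j) {..<q}"
  by (simp add: row_norm_def L2_set_def)

lemma L2_scale: "L2_set (\<lambda>k. c * f k) A = \<bar>c\<bar> * L2_set f A"
proof -
  have "L2_set (\<lambda>k. c * f k) A = L2_set (\<lambda>k. \<bar>c\<bar> * f k) A"
    unfolding L2_set_def by (simp add: power_mult_distrib)
  also have "\<dots> = \<bar>c\<bar> * L2_set f A" by (simp add: L2_set_right_distrib)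
  finally show ?thesis .
qed

lemma L2_sum: "finite L \<Longrightarrow> L2_set (\<lambda>k. \<Sum>l\<in>L. h l k) A \<le> (\<Sum>l\<in>L. L2_set (h l) A)"
proof (induction L rule: finite_induct)
  case empty
  then show ?case by (simp add: L2_set_def)
next
  case (insert x F)
  have "L2_set (\<lambda>k. \<Sum>l\<in>insert x F. h l k) A = L2_set (\<lambda>k. h x k + (\<Sum>l\<in>F. h l k)) A"
    using insert by simp
  also have "\<dots> \<le> L2_set (h x) A + L2_set (\<lambda>k. \<Sum>l\<in>F. h l k) A"
    by (rule L2_set_triangle_ineq)
  also have "\<dots> \<le> L2_set (h x) A + (\<Sum>l\<in>F. L2_set (h l) A)" using insert by simp
  finally show ?case using insert by simp
qed

lemma rn_restr: "row_norm q (restr_rows T M) j = (if j \<in> T then row_norm q M j else 0)"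
  by (simp add: row_norm_def restr_rows_def)

lemma rn_nonneg: "row_norm q M j \<ge> 0"
  by (simp add: row_norm_def sum_nonneg)

lemma rn_le_2inf: "j < p \<Longrightarrow> row_norm q M j \<le> norm2inf p q M"
  unfolding norm2inf_def by (rule Max_ge) auto

lemma norm2inf_nonneg: "norm2inf p q M \<ge> 0"
  unfolding norm2inf_def by (rule Max_ge_iff[THEN iffD2]) auto

lemma norm2inf_le: "c \<ge> 0 \<Longrightarrow> (\<And>j. j < p \<Longrightarrow> row_norm q M j \<le> c) \<Longrightarrow> norm2inf p q M \<le> c"
  unfolding norm2inf_def by (subst Max_le_iff) auto

theorem lemma4:
  fixes n p q s :: nat and \<alpha> :: real
    and X B B_hat :: "nat \<Rightarrow> nat \<Rightarrow> real"
  defines "\<Psi> \<equiv> gram n X"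
    and "\<Delta> \<equiv> (\<lambda>j k. B_hat j k - B j k)"
    and "S \<equiv> {j. j < p \<and> row_norm q B j \<noteq> 0}"
  assumes diag: "\<forall>j<p. \<Psi> j j = 1"
    and incoh: "\<forall>j<p. \<forall>j'<p. j' \<noteq> j \<longrightarrow> \<bar>\<Psi> j j'\<bar> \<le> 1 / (7 * \<alpha> * real s)"
    and s_ge: "s \<ge> 1"
    and alpha_gt: "\<alpha> > 1"
    and card_S: "card S \<le> s"
    and cone: "norm21 p q (restr_rows ({..<p} - S) \<Delta>) \<le> 3 * norm21 p q (restr_rows S \<Delta>)"
  shows "frob p q (restr_rows S \<Delta>)
           \<le> \<alpha> / (\<alpha> - 1) * 4 * sqrt (real s) * norm2inf p q (mat_mul p \<Psi> \<Delta>)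
       \<and> norm21 p q \<Delta> \<le> \<alpha> / (\<alpha> - 1) * 16 * real s * norm2inf p q (mat_mul p \<Psi> \<Delta>)
       \<and> norm2inf p q \<Delta> \<le> (1 + 16 / (7 * (\<alpha> - 1))) * norm2inf p q (mat_mul p \<Psi> \<Delta>)"
proof -
  define g where "g = norm2inf p q (mat_mul p \<Psi> \<Delta>)"
  define N where "N = norm21 p q \<Delta>"
  define A where "A = norm21 p q (restr_rows S \<Delta>)"
  define \<mu> where "\<mu> = 1 / (7 * \<alpha> * real s)"
  have g0: "g \<ge> 0" unfolding g_def by (rule norm2inf_nonneg)
  have N0: "N \<ge> 0" unfolding N_def norm21_def by (simp add: sum_nonneg rn_nonneg)
  have mu0: "\<mu> \<ge> 0" using alpha_gt unfolding \<mu>_def by simp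
  have SsubP: "S \<subseteq> {..<p}" unfolding S_def by auto
  have rowb: "row_norm q \<Delta> j \<le> g + \<mu> * N" if j: "j < p" for j
  proof -
    let ?L = "{..<p} - {j}"
    have split: "\<And>k. mat_mul p \<Psi> \<Delta> j k = \<Delta> j k + (\<Sum>l\<in>?L. \<Psi> j l * \<Delta> l k)"
    proof -
      fix k
      have "mat_mul p \<Psi> \<Delta> j k = \<Psi> j j * \<Delta> j k + (\<Sum>l\<in>?L. \<Psi> j l * \<Delta> l k)"
        unfolding mat_mul_def using j
        by (subst sum.remove[of _ j]) auto
      then show "mat_mul p \<Psi> \<Delta> j k = \<Delta> j k + (\<Sum>l\<in>?L. \<Psi> j l * \<Delta> l k)"
        using diag j by simp
    qed
    have eq: "\<Delta> j = (\<lambda>k. mat_mul p \<Psi> \<Delta> j k + (\<Sum>l\<in>?L. (- \<Psi> j l) * \<Delta> l k))"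
      using split by (auto simp: sum_negf)
    have "row_norm q \<Delta> j \<le> L2_set (mat_mul p \<Psi> \<Delta> j) {..<q}
          + L2_set (\<lambda>k. \<Sum>l\<in>?L. (- \<Psi> j l) * \<Delta> l k) {..<q}"
      unfolding rn_L2 by (subst eq) (rule L2_set_triangle_ineq)
    also have "L2_set (mat_mul p \<Psi> \<Delta> j) {..<q} \<le> g"
      unfolding g_def using rn_le_2inf[OF j] by (simp add: rn_L2)
    also have "L2_set (\<lambda>k. \<Sum>l\<in>?L. (- \<Psi> j l) * \<Delta> l k) {..<q}
        \<le> (\<Sum>l\<in>?L. L2_set (\<lambda>k. (- \<Psi> j l) * \<Delta> l k) {..<q})"
      by (rule L2_sum) simp
    also have "\<dots> = (\<Sum>l\<in>?L. \<bar>\<Psi> j l\<bar> * row_norm q \<Delta> l)"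
      apply (rule sum.cong[OF refl])
      subgoal for l using L2_scale[of "- \<Psi> j l" "\<Delta> l" "{..<q}"] by (simp add: rn_L2)
      done
    also have "\<dots> \<le> (\<Sum>l\<in>?L. \<mu> * row_norm q \<Delta> l)"
      apply (rule sum_mono)
      apply (rule mult_right_mono)
      using incoh j unfolding \<mu>_def apply auto[1]
      by (rule rn_nonneg)
    also have "\<dots> \<le> (\<Sum>l<p. \<mu> * row_norm q \<Delta> l)"
      by (rule sum_mono2) (auto intro: mult_nonneg_nonneg mu0 rn_nonneg)
    also have "\<dots> = \<mu> * N" unfolding N_def norm21_def by (simp add: sum_distrib_left)
    finally show ?thesis by simp
  qed
  have NA: "N \<le> 4 * A"
  proof -
    have "N = norm21 p q (restr_rows ({..<p} - S) \<Delta>) + A"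
      unfolding N_def A_def norm21_def rn_restr sum.distrib[symmetric]
      by (rule sum.cong) auto
    then show ?thesis using cone unfolding A_def by simp
  qed
  have A_eq: "A = (\<Sum>j\<in>S. row_norm q \<Delta> j)"
    unfolding A_def norm21_def rn_restr using SsubP
    by (simp add: sum.If_cases Int_absorb1 flip: sum.inter_filter)
  have A_le: "A \<le> real s * (g + \<mu> * N)"
  proof -
    have "A \<le> (\<Sum>j\<in>S. g + \<mu> * N)" unfolding A_eq
      by (rule sum_mono) (use rowb SsubP in auto)
    also have "\<dots> = real (card S) * (g + \<mu> * N)" by simp
    also have "\<dots> \<le> real s * (g + \<mu> * N)"
      by (rule mult_right_mono) (use card_S g0 mu0 N0 in auto)
    finally show ?thesis .
  qed
  have smu: "real s * \<mu> = 1 / (7 * \<alpha>)" unfolding \<mu>_def using s_ge by simp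
  have A1: "A * (7 * \<alpha> - 4) \<le> 7 * \<alpha> * real s * g"
  proof -
    have "A \<le> real s * g + (real s * \<mu>) * N" using A_le by (simp add: algebra_simps)
    also have "\<dots> \<le> real s * g + (real s * \<mu>) * (4 * A)"
      by (rule add_left_mono, rule mult_left_mono) (use NA smu alpha_gt in auto)
    finally have "A \<le> real s * g + 4 * A / (7 * \<alpha>)" using smu by simp
    then have "7 * \<alpha> * A \<le> 7 * \<alpha> * (real s * g + 4 * A / (7 * \<alpha>))"
      using alpha_gt by simp
    then show ?thesis using alpha_gt by (simp add: algebra_simps)
  qed
  have pos: "7 * \<alpha> - 4 > 0" using alpha_gt by simp
  have Nb: "N * (7 * \<alpha> - 4) \<le> 28 * \<alpha> * real s * g"
  proof -
    have "N * (7 * \<alpha> - 4) \<le> (4 * A) * (7 * \<alpha> - 4)"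
      using NA pos by (intro mult_right_mono) auto
    also have "\<dots> = 4 * (A * (7 * \<alpha> - 4))" by simp
    also have "\<dots> \<le> 4 * (7 * \<alpha> * real s * g)" using A1 by linarith
    finally show ?thesis by simp
  qed
  have r: "g + \<mu> * N \<le> g * (7 * \<alpha>) / (7 * \<alpha> - 4)"
  proof -
    have "\<mu> * N * (7 * \<alpha> - 4) \<le> \<mu> * (28 * \<alpha> * real s * g)"
      using mult_left_mono[OF Nb mu0] by (simp add: algebra_simps)
    also have "\<dots> = 4 * g" unfolding \<mu>_def using s_ge alpha_gt by simp
    finally have "\<mu> * N * (7 * \<alpha> - 4) \<le> 4 * g" .
    then have "(g + \<mu> * N) * (7 * \<alpha> - 4) \<le> g * (7 * \<alpha>)"
      by (simp add: algebra_simps)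
    then show ?thesis using pos by (simp add: pos_le_divide_eq)
  qed
  have c1: "(7 * \<alpha>) / (7 * \<alpha> - 4) \<le> 4 * \<alpha> / (\<alpha> - 1)"
    using alpha_gt pos by (simp add: divide_simps)
  have rr: "g + \<mu> * N \<le> \<alpha> / (\<alpha> - 1) * 4 * g"
  proof -
    have "g * (7 * \<alpha>) / (7 * \<alpha> - 4) = g * ((7 * \<alpha>) / (7 * \<alpha> - 4))" by simp
    also have "\<dots> \<le> g * (4 * \<alpha> / (\<alpha> - 1))" by (rule mult_left_mono[OF c1 g0])
    finally have "g * (7 * \<alpha>) / (7 * \<alpha> - 4) \<le> g * (4 * \<alpha> / (\<alpha> - 1))" .
    moreover have "g * (4 * \<alpha> / (\<alpha> - 1)) = \<alpha> / (\<alpha> - 1) * 4 * g" by simp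
    ultimately show ?thesis using r by linarith
  qed
  have rr0: "0 \<le> g + \<mu> * N" using g0 mu0 N0 by simp
  have a: "frob p q (restr_rows S \<Delta>) \<le> \<alpha> / (\<alpha> - 1) * 4 * sqrt (real s) * g"
  proof -
    have sq: "\<And>j. (\<Sum>k<q. (restr_rows S \<Delta> j k)^2) = (row_norm q (restr_rows S \<Delta>) j)^2"
      unfolding row_norm_def by (simp add: sum_nonneg)
    have "(\<Sum>j<p. \<Sum>k<q. (restr_rows S \<Delta> j k)^2) = (\<Sum>j<p. (row_norm q (restr_rows S \<Delta>) j)^2)"
      using sq by simp
    also have "\<dots> \<le> (\<Sum>j<p. if j \<in> S then (g + \<mu> * N)^2 else 0)"
      apply (rule sum_mono)
      using rowb rn_nonneg by (auto simp: rn_restr intro!: power_mono)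
    also have "\<dots> = real (card S) * (g + \<mu> * N)^2"
      using SsubP by (simp add: sum.If_cases Int_absorb1)
    also have "\<dots> \<le> real s * (\<alpha> / (\<alpha> - 1) * 4 * g)^2"
      apply (rule mult_mono)
      using card_S rr rr0 by (auto intro!: power_mono)
    finally have "frob p q (restr_rows S \<Delta>) \<le> sqrt (real s * (\<alpha> / (\<alpha> - 1) * 4 * g)^2)"
      unfolding frob_def by (rule real_sqrt_le_mono)
    also have "\<dots> = sqrt (real s) * (\<alpha> / (\<alpha> - 1) * 4 * g)"
      using alpha_gt g0 by (simp add: real_sqrt_mult)
    finally show ?thesis by (simp add: mult_ac)
  qed
  have c2: "28 * \<alpha> / (7 * \<alpha> - 4) \<le> 16 * \<alpha> / (\<alpha> - 1)"
    using alpha_gt pos by (simp add: divide_simps)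
  have b: "N \<le> \<alpha> / (\<alpha> - 1) * 16 * real s * g"
  proof -
    have "N \<le> 28 * \<alpha> * real s * g / (7 * \<alpha> - 4)" using Nb pos by (simp add: pos_le_divide_eq)
    also have "\<dots> = (real s * g) * (28 * \<alpha> / (7 * \<alpha> - 4))" by simp
    also have "\<dots> \<le> (real s * g) * (16 * \<alpha> / (\<alpha> - 1))"
      by (rule mult_left_mono[OF c2]) (use g0 in simp)
    finally show ?thesis by (simp add: mult_ac)
  qed
  have c: "norm2inf p q \<Delta> \<le> (1 + 16 / (7 * (\<alpha> - 1))) * g"
  proof (rule norm2inf_le)
    show "0 \<le> (1 + 16 / (7 * (\<alpha> - 1))) * g" using alpha_gt g0 by simp
    fix j assume j: "j < p"
    have "\<mu> * N \<le> \<mu> * (\<alpha> / (\<alpha> - 1) * 16 * real s * g)" by (rule mult_left_mono[OF b mu0])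
    also have "\<dots> = 16 / (7 * (\<alpha> - 1)) * g" unfolding \<mu>_def using s_ge alpha_gt by simp
    finally show "row_norm q \<Delta> j \<le> (1 + 16 / (7 * (\<alpha> - 1))) * g"
      using rowb[OF j] by (simp add: algebra_simps)
  qed
  show ?thesis using a b c unfolding g_def N_def by simp
qed

end
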